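(* Let $T$ be a tournament with $n$ vertices. Then in the dichromatic polynomial $P(T;x)$ the coefficient of $x^{n-1}$ is zero, and the coefficient of $x^{n-2}$ equals $-t$, where $t$ is the number of directed triangles of $T$.
   Context: A tournament is an orientation of a complete graph; a directed triangle is a directed cycle of length $3$. For a positive integer $k$, a proper $k$-coloring of a digraph $D$ is a map $c:V(D)\to\{1,\ldots,k\}$ such that each color class induces a subdigraph with no directed cycle. The number of proper $k$-colorings of $D$ is a polynomial in $k$, denoted $P(D;k)$ (the dichromatic polynomial). *)

theory Defs
  imports "HOL-Library.FuncSet" "HOL-Computational_Algebra.Polynomial"
begin

text \<open>A digraph is given by a finite vertex set V and an arc relation E (E u v: arc u to v).\<close>

definition tournament :: "'a set \<Rightarrow> ('a \<Rightarrow> 'a \<Rightarrow> bool) \<Rightarrow> bool" where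
  "tournament V E \<longleftrightarrow> finite V \<and>
     (\<forall>u v. E u v \<longrightarrow> u \<in> V \<and> v \<in> V) \<and>
     (\<forall>v. \<not> E v v) \<and>
     (\<forall>u\<in>V. \<forall>v\<in>V. u \<noteq> v \<longrightarrow> (E u v \<longleftrightarrow> \<not> E v u))"

definition induced_arcs :: "('a \<Rightarrow> 'a \<Rightarrow> bool) \<Rightarrow> 'a set \<Rightarrow> ('a \<times> 'a) set" where
  "induced_arcs E S = {(u, v). u \<in> S \<and> v \<in> S \<and> E u v}"

definition proper_colorings :: "'a set \<Rightarrow> ('a \<Rightarrow> 'a \<Rightarrow> bool) \<Rightarrow> nat \<Rightarrow> ('a \<Rightarrow> nat) set" where
  "proper_colorings V E k =
     {c \<in> V \<rightarrow>\<^sub>E {1..k}. \<forall>i \<in> {1..k}. acyclic (induced_arcs E {v \<in> V. c v = i})}"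

definition dichromatic_poly :: "'a set \<Rightarrow> ('a \<Rightarrow> 'a \<Rightarrow> bool) \<Rightarrow> int poly" where
  "dichromatic_poly V E =
     (THE p. \<forall>k::nat. k \<ge> 1 \<longrightarrow> poly p (int k) = int (card (proper_colorings V E k)))"

definition coeff_int :: "'b::zero poly \<Rightarrow> int \<Rightarrow> 'b" where
  "coeff_int p i = (if i < 0 then 0 else coeff p (nat i))"

definition num_directed_triangles :: "'a set \<Rightarrow> ('a \<Rightarrow> 'a \<Rightarrow> bool) \<Rightarrow> nat" where
  "num_directed_triangles V E =
     card {S. S \<subseteq> V \<and> (\<exists>a b c. S = {a, b, c} \<and> a \<noteq> b \<and> b \<noteq> c \<and> a \<noteq> c
                                  \<and> E a b \<and> E b c \<and> E c a)}"

end

theory Submission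
  imports Defs
begin


lemma tri_of_cycle:
  assumes T: "tournament V E" and SV: "S \<subseteq> V"
  and xy: "(x,y) \<in> (induced_arcs E S)\<^sup>+"
  shows "(y,x) \<in> induced_arcs E S \<Longrightarrow> \<exists>a b c. a\<in>S \<and> b\<in>S \<and> c\<in>S \<and> E a b \<and> E b c \<and> E c a"
  using xy
proof (induction rule: converse_trancl_induct)
  case (base x)
  then have "E x y" "E y x" "x \<in> V" "y \<in> V" using SV by (auto simp: induced_arcs_def)
  then show ?case using T unfolding tournament_def by metis
next
  case (step x z)
  have xz: "E x z" "x \<in> S" "z \<in> S" using step.hyps(1) by (auto simp: induced_arcs_def)
  have yx: "E y x" "y \<in> S" using step.prems by (auto simp: induced_arcs_def)
  show ?case
  proof (cases "z = y")
    case True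
    then show ?thesis using xz yx SV T unfolding tournament_def by (metis subsetD)
  next
    case False
    then have "E z y \<or> E y z" using xz yx SV T unfolding tournament_def by (metis subsetD)
    then show ?thesis
    proof
      assume "E z y" then show ?thesis using xz yx by blast
    next
      assume "E y z" then have "(y,z) \<in> induced_arcs E S" using xz yx by (auto simp: induced_arcs_def)
      then show ?thesis using step.IH by blast
    qed
  qed
qed

lemma acyclic_iff_no_tri:
  assumes T: "tournament V E" and SV: "S \<subseteq> V"
  shows "acyclic (induced_arcs E S) \<longleftrightarrow> \<not> (\<exists>a b c. a\<in>S \<and> b\<in>S \<and> c\<in>S \<and> E a b \<and> E b c \<and> E c a)"
proof
  assume ac: "acyclic (induced_arcs E S)"
  show "\<not> (\<exists>a b c. a\<in>S \<and> b\<in>S \<and> c\<in>S \<and> E a b \<and> E b c \<and> E c a)"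
  proof
    assume "\<exists>a b c. a\<in>S \<and> b\<in>S \<and> c\<in>S \<and> E a b \<and> E b c \<and> E c a"
    then obtain a b c where h: "a\<in>S" "b\<in>S" "c\<in>S" "E a b" "E b c" "E c a" by blast
    then have "(a,b) \<in> induced_arcs E S" "(b,c) \<in> induced_arcs E S" "(c,a) \<in> induced_arcs E S"
      by (auto simp: induced_arcs_def)
    then have "(a,a) \<in> (induced_arcs E S)\<^sup>+" by (meson trancl.simps)
    then show False using ac by (auto simp: acyclic_def)
  qed
next
  assume nt: "\<not> (\<exists>a b c. a\<in>S \<and> b\<in>S \<and> c\<in>S \<and> E a b \<and> E b c \<and> E c a)"
  show "acyclic (induced_arcs E S)"
    unfolding acyclic_def
  proof
    fix x show "(x,x) \<notin> (induced_arcs E S)\<^sup>+"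
    proof
      assume "(x,x) \<in> (induced_arcs E S)\<^sup>+"
      then obtain z where "(x,z) \<in> (induced_arcs E S)\<^sup>*" "(z,x) \<in> induced_arcs E S"
        using tranclD2 by metis
      then show False
      proof (cases rule: rtranclE)
        case base
        then show False using \<open>(z,x) \<in> induced_arcs E S\<close> T by (auto simp: induced_arcs_def tournament_def)
      next
        case (step w)
        then have "(x,z) \<in> (induced_arcs E S)\<^sup>+" by auto
        then show False using tri_of_cycle[OF T SV] nt \<open>(z,x) \<in> induced_arcs E S\<close> by blast
      qed
    qed
  qed
qed



definition tri_set :: "'a set \<Rightarrow> ('a \<Rightarrow> 'a \<Rightarrow> bool) \<Rightarrow> 'a set set" where
  "tri_set V E = {S. S \<subseteq> V \<and> (\<exists>a b c. S = {a, b, c} \<and> a \<noteq> b \<and> b \<noteq> c \<and> a \<noteq> c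
                                  \<and> E a b \<and> E b c \<and> E c a)}"

definition monoc :: "('a \<Rightarrow> nat) \<Rightarrow> 'a set \<Rightarrow> bool" where
  "monoc c S = (\<forall>u\<in>S. \<forall>v\<in>S. c u = c v)"

lemma proper_iff:
  assumes T: "tournament V E"
  shows "proper_colorings V E k = {c \<in> V \<rightarrow>\<^sub>E {1..k}. \<forall>S\<in>tri_set V E. \<not> monoc c S}"
proof -
  have irr: "\<And>v. \<not> E v v" and inV: "\<And>u v. E u v \<Longrightarrow> u \<in> V \<and> v \<in> V"
    and anti: "\<And>u v. E u v \<Longrightarrow> \<not> E v u"
  proof -
    show "\<And>v. \<not> E v v" using T unfolding tournament_def by blast
    show "\<And>u v. E u v \<Longrightarrow> u \<in> V \<and> v \<in> V" using T unfolding tournament_def by blast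
    show "\<And>u v. E u v \<Longrightarrow> \<not> E v u"
    proof -
      fix u v assume "E u v"
      moreover have "u \<in> V" "v \<in> V" "u \<noteq> v" using T \<open>E u v\<close> unfolding tournament_def by metis+
      ultimately show "\<not> E v u" using T unfolding tournament_def by metis
    qed
  qed
  have "(\<forall>i \<in> {1..k}. acyclic (induced_arcs E {v \<in> V. c v = i})) \<longleftrightarrow> (\<forall>S\<in>tri_set V E. \<not> monoc c S)"
    if c: "c \<in> V \<rightarrow>\<^sub>E {1..k}" for c
  proof -
    have "(\<forall>i \<in> {1..k}. acyclic (induced_arcs E {v \<in> V. c v = i})) \<longleftrightarrow>
       (\<forall>i \<in> {1..k}. \<not> (\<exists>a b d. a\<in>{v \<in> V. c v = i} \<and> b\<in>{v \<in> V. c v = i} \<and> d\<in>{v \<in> V. c v = i} \<and> E a b \<and> E b d \<and> E d a))"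
    proof -
      have ac: "\<And>i. acyclic (induced_arcs E {v \<in> V. c v = i}) \<longleftrightarrow> \<not> (\<exists>a b d. a\<in>{v \<in> V. c v = i} \<and> b\<in>{v \<in> V. c v = i} \<and> d\<in>{v \<in> V. c v = i} \<and> E a b \<and> E b d \<and> E d a)"
        by (rule acyclic_iff_no_tri[OF T]) auto
      show ?thesis by (simp only: ac)
    qed
    also have "\<dots> \<longleftrightarrow> \<not> (\<exists>a b d. E a b \<and> E b d \<and> E d a \<and> c a = c b \<and> c b = c d)"
    proof
      assume h: "\<forall>i \<in> {1..k}. \<not> (\<exists>a b d. a\<in>{v \<in> V. c v = i} \<and> b\<in>{v \<in> V. c v = i} \<and> d\<in>{v \<in> V. c v = i} \<and> E a b \<and> E b d \<and> E d a)"
      show "\<not> (\<exists>a b d. E a b \<and> E b d \<and> E d a \<and> c a = c b \<and> c b = c d)"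
      proof
        assume "\<exists>a b d. E a b \<and> E b d \<and> E d a \<and> c a = c b \<and> c b = c d"
        then obtain a b d where abd: "E a b" "E b d" "E d a" "c a = c b" "c b = c d" by blast
        have "a \<in> V" "b \<in> V" "d \<in> V" using inV abd by blast+
        moreover have "c a \<in> {1..k}" using c \<open>a \<in> V\<close> by (auto simp: PiE_def Pi_def)
        ultimately have mem: "a \<in> {v \<in> V. c v = c a}" "b \<in> {v \<in> V. c v = c a}" "d \<in> {v \<in> V. c v = c a}" and ca: "c a \<in> {1..k}"
          using abd by auto
        have "\<not> (\<exists>a' b' d'. a'\<in>{v \<in> V. c v = c a} \<and> b'\<in>{v \<in> V. c v = c a} \<and> d'\<in>{v \<in> V. c v = c a} \<and> E a' b' \<and> E b' d' \<and> E d' a')"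
          using h ca by (rule bspec)
        then show False using mem abd(1-3) by blast
      qed
    next
      assume h: "\<not> (\<exists>a b d. E a b \<and> E b d \<and> E d a \<and> c a = c b \<and> c b = c d)"
      show "\<forall>i \<in> {1..k}. \<not> (\<exists>a b d. a\<in>{v \<in> V. c v = i} \<and> b\<in>{v \<in> V. c v = i} \<and> d\<in>{v \<in> V. c v = i} \<and> E a b \<and> E b d \<and> E d a)"
      proof (intro ballI notI)
        fix i assume "\<exists>a b d. a\<in>{v \<in> V. c v = i} \<and> b\<in>{v \<in> V. c v = i} \<and> d\<in>{v \<in> V. c v = i} \<and> E a b \<and> E b d \<and> E d a"
        then obtain a b d where abd: "a\<in>{v \<in> V. c v = i}" "b\<in>{v \<in> V. c v = i}" "d\<in>{v \<in> V. c v = i}" "E a b" "E b d" "E d a"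
          by blast
        then have "c a = c b" "c b = c d" by simp_all
        then show False using h abd(4-6) by blast
      qed
    qed
    also have "\<dots> \<longleftrightarrow> (\<forall>S\<in>tri_set V E. \<not> monoc c S)"
    proof
      assume h: "\<not> (\<exists>a b d. E a b \<and> E b d \<and> E d a \<and> c a = c b \<and> c b = c d)"
      show "\<forall>S\<in>tri_set V E. \<not> monoc c S"
      proof
        fix S assume "S \<in> tri_set V E"
        then obtain a b d where S: "S = {a,b,d}" "E a b" "E b d" "E d a"
          unfolding tri_set_def mem_Collect_eq by (elim conjE exE) blast
        show "\<not> monoc c S"
        proof
          assume "monoc c S"
          moreover have "a \<in> S" "b \<in> S" "d \<in> S" using S(1) by auto
          ultimately have "c a = c b" "c b = c d" unfolding monoc_def by blast+
          then show False using h S(2-4) by blast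
        qed
      qed
    next
      assume h: "\<forall>S\<in>tri_set V E. \<not> monoc c S"
      show "\<not> (\<exists>a b d. E a b \<and> E b d \<and> E d a \<and> c a = c b \<and> c b = c d)"
      proof
        assume "\<exists>a b d. E a b \<and> E b d \<and> E d a \<and> c a = c b \<and> c b = c d"
        then obtain a b d where abd: "E a b" "E b d" "E d a" "c a = c b" "c b = c d" by blast
        then have "{a,b,d} \<in> tri_set V E" unfolding tri_set_def
          proof -
          have "{a,b,d} \<subseteq> V" using inV abd by blast
          moreover have "a \<noteq> b" using abd irr by metis
          moreover have "b \<noteq> d" using abd irr by metis
          moreover have "a \<noteq> d" using abd anti by metis
          ultimately show "{a,b,d} \<in> {S. S \<subseteq> V \<and> (\<exists>a b c. S = {a, b, c} \<and> a \<noteq> b \<and> b \<noteq> c \<and> a \<noteq> c \<and> E a b \<and> E b c \<and> E c a)}"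
            using abd by (intro CollectI conjI exI[of _ a] exI[of _ b] exI[of _ d]) auto
        qed
        moreover have "monoc c {a,b,d}" using abd by (auto simp: monoc_def)
        ultimately show False using h by blast
      qed
    qed
    finally show ?thesis .
  qed
  then show ?thesis unfolding proper_colorings_def by blast
qed

lemma num_tri: "num_directed_triangles V E = card (tri_set V E)"
  unfolding num_directed_triangles_def tri_set_def by simp

lemma incl_excl:
  fixes V :: "'a set"
  assumes T: "tournament V E"
  shows "int (card (proper_colorings V E k)) =
    (\<Sum>F\<in>Pow (tri_set V E). (-1) ^ card F * int (card {c \<in> V \<rightarrow>\<^sub>E {1..k}. \<forall>S\<in>F. monoc c S}))"
proof -
  define C where "C = V \<rightarrow>\<^sub>E {1..(k::nat)}"
  define G where "G = (\<lambda>S::'a set. {c::'a\<Rightarrow>nat. monoc c S})"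
  define f where "f = (\<lambda>X. int (card (X \<inter> C)))"
  have finV: "finite V" using T by (simp add: tournament_def)
  have finC: "finite C" unfolding C_def using finV by (simp add: finite_PiE)
  have finT: "finite (tri_set V E)" 
  proof -
    have "tri_set V E \<subseteq> Pow V" by (auto simp: tri_set_def)
    then show ?thesis using finV finite_subset by blast
  qed
  have add: "f (X \<union> Y) = f X + f Y" if "disjnt X Y" for X Y
  proof -
    have "(X \<union> Y) \<inter> C = (X \<inter> C) \<union> (Y \<inter> C)" by blast
    moreover have "disjnt (X \<inter> C) (Y \<inter> C)" using that by (auto simp: disjnt_def)
    ultimately show ?thesis unfolding f_def using finC
      by (simp add: card_Un_disjnt)
  qed
  have IE: "f (\<Union>(G ` tri_set V E)) = (\<Sum>B | B \<subseteq> tri_set V E \<and> B \<noteq> {}. (-1) ^ (card B + 1) * f (\<Inter> (G ` B)))"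
    using Incl_Excl_UN[where f=f and A="tri_set V E" and G=G] add finT by blast
  have pc: "proper_colorings V E k = C - \<Union>(G ` tri_set V E)"
    unfolding proper_iff[OF T] C_def G_def by auto
  have "int (card (proper_colorings V E k)) = int (card C) - f (\<Union>(G ` tri_set V E))"
  proof -
    have "C - \<Union>(G ` tri_set V E) = C - (\<Union>(G ` tri_set V E) \<inter> C)" by blast
    moreover have "card (C - (\<Union>(G ` tri_set V E) \<inter> C)) = card C - card (\<Union>(G ` tri_set V E) \<inter> C)"
      using finC by (intro card_Diff_subset) auto
    moreover have "card (\<Union>(G ` tri_set V E) \<inter> C) \<le> card C" using finC by (intro card_mono) auto
    ultimately show ?thesis unfolding f_def pc by (simp add: of_nat_diff)
  qed
  also have "\<dots> = int (card C) + (\<Sum>B | B \<subseteq> tri_set V E \<and> B \<noteq> {}. (-1) ^ card B * f (\<Inter> (G ` B)))"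
    unfolding IE by (simp add: sum_negf[symmetric])
  also have "\<dots> = (\<Sum>B\<in>Pow (tri_set V E). (-1) ^ card B * f (\<Inter> (G ` B)))"
  proof -
    have "Pow (tri_set V E) = insert {} {B. B \<subseteq> tri_set V E \<and> B \<noteq> {}}" by auto
    moreover have "finite {B. B \<subseteq> tri_set V E \<and> B \<noteq> {}}" using finT by simp
    moreover have "{} \<notin> {B. B \<subseteq> tri_set V E \<and> B \<noteq> {}}" by simp
    moreover have "f (\<Inter> (G ` {})) = int (card C)" by (simp add: f_def)
    ultimately show ?thesis by (simp only: sum.insert) simp
  qed
  also have "\<dots> = (\<Sum>F\<in>Pow (tri_set V E). (-1) ^ card F * int (card {c \<in> V \<rightarrow>\<^sub>E {1..k}. \<forall>S\<in>F. monoc c S}))"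
  proof (rule sum.cong[OF refl])
    fix F assume "F \<in> Pow (tri_set V E)"
    have "\<Inter> (G ` F) \<inter> C = {c \<in> V \<rightarrow>\<^sub>E {1..k}. \<forall>S\<in>F. monoc c S}"
      unfolding G_def C_def by blast
    then show "(-1) ^ card F * f (\<Inter> (G ` F)) = (-1) ^ card F * int (card {c \<in> V \<rightarrow>\<^sub>E {1..k}. \<forall>S\<in>F. monoc c S})"
      unfolding f_def by simp
  qed
  finally show ?thesis .
qed



definition PF :: "'a set set \<Rightarrow> ('a \<times> 'a) set" where
  "PF F = (\<Union>T\<in>F. T \<times> T)"

definition RF :: "'a set \<Rightarrow> 'a set set \<Rightarrow> ('a \<times> 'a) set" where
  "RF V F = Id_on V \<union> (PF F)\<^sup>+"

lemma PF_sub: "\<Union>F \<subseteq> V \<Longrightarrow> PF F \<subseteq> V \<times> V"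
  unfolding PF_def by blast

lemma equiv_RF:
  assumes "\<Union>F \<subseteq> V" shows "equiv V (RF V F)"
proof (rule equivI)
  have P: "(PF F)\<^sup>+ \<subseteq> V \<times> V" using trancl_subset_Sigma[OF PF_sub[OF assms]] .
  show "RF V F \<subseteq> V \<times> V" unfolding RF_def using P by blast
  show "refl_on V (RF V F)" unfolding RF_def refl_on_def by blast
  have "sym (PF F)" unfolding PF_def sym_def by blast
  then have "sym ((PF F)\<^sup>+)" by (rule sym_trancl)
  then show "sym (RF V F)" unfolding RF_def sym_def by blast
  show "trans (RF V F)"
    unfolding trans_def
  proof (intro allI impI)
    fix x y z assume xy: "(x,y) \<in> RF V F" and yz: "(y,z) \<in> RF V F"
    show "(x,z) \<in> RF V F"
    proof (cases "(x,y) \<in> Id_on V")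
      case True then show ?thesis using yz by auto
    next
      case False
      then have xy': "(x,y) \<in> (PF F)\<^sup>+" using xy unfolding RF_def by blast
      show ?thesis
      proof (cases "(y,z) \<in> Id_on V")
        case True then show ?thesis using xy by auto
      next
        case False
        then have "(y,z) \<in> (PF F)\<^sup>+" using yz unfolding RF_def by blast
        then have "(x,z) \<in> (PF F)\<^sup>+" using xy' by (rule trancl_trans[rotated])
        then show ?thesis unfolding RF_def by blast
      qed
    qed
  qed
qed

lemma mono_iff_RF:
  assumes "\<Union>F \<subseteq> V"
  shows "(\<forall>T\<in>F. monoc c T) \<longleftrightarrow> (\<forall>(u,v)\<in>RF V F. c u = c v)"
proof
  assume m: "\<forall>T\<in>F. monoc c T"
  have base: "c u = c v" if "(u,v) \<in> PF F" for u v
    using that m unfolding PF_def monoc_def by blast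
  have "c u = c v" if "(u,v) \<in> (PF F)\<^sup>+" for u v
    using that
  proof (induction rule: trancl_induct)
    case (base y) then show ?case using \<open>\<And>u v. (u,v) \<in> PF F \<Longrightarrow> c u = c v\<close> by blast
  next
    case (step y z)
    then show ?case using \<open>\<And>u v. (u,v) \<in> PF F \<Longrightarrow> c u = c v\<close> by metis
  qed
  then show "\<forall>(u,v)\<in>RF V F. c u = c v" unfolding RF_def by auto
next
  assume r: "\<forall>(u,v)\<in>RF V F. c u = c v"
  show "\<forall>T\<in>F. monoc c T"
  proof (intro ballI)
    fix T assume "T \<in> F"
    then have "T \<times> T \<subseteq> RF V F" unfolding RF_def PF_def by blast
    then show "monoc c T" using r unfolding monoc_def by blast
  qed
qed

lemma count_quot:
  fixes V :: "'a set" and A :: "'b set"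
  assumes eq: "equiv V R" and finV: "finite V" and finA: "finite A"
  shows "card {c \<in> V \<rightarrow>\<^sub>E A. \<forall>(u,v)\<in>R. c u = c v} = card A ^ card (V//R)"
proof -
  define h where "h = (\<lambda>g::'a set \<Rightarrow> 'b. \<lambda>v\<in>V. g (R``{v}))"
  have finQ: "finite (V//R)" using finite_quotient[OF finV equiv_type[OF eq]] .
  have inj: "inj_on h (V//R \<rightarrow>\<^sub>E A)"
  proof (rule inj_onI)
    fix g g' assume g: "g \<in> V//R \<rightarrow>\<^sub>E A" and g': "g' \<in> V//R \<rightarrow>\<^sub>E A" and hg: "h g = h g'"
    show "g = g'"
    proof (rule extensionalityI)
      show "g \<in> extensional (V//R)" "g' \<in> extensional (V//R)" using g g' by (simp_all add: PiE_iff)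
      fix X assume "X \<in> V//R"
      then obtain x where x: "X = R``{x}" "x \<in> V" by (rule quotientE)
      have "h g x = h g' x" using hg by simp
      then show "g X = g' X" using x unfolding h_def by simp
    qed
  qed
  have img: "h ` (V//R \<rightarrow>\<^sub>E A) = {c \<in> V \<rightarrow>\<^sub>E A. \<forall>(u,v)\<in>R. c u = c v}"
  proof
    show "h ` (V//R \<rightarrow>\<^sub>E A) \<subseteq> {c \<in> V \<rightarrow>\<^sub>E A. \<forall>(u,v)\<in>R. c u = c v}"
    proof
      fix c assume "c \<in> h ` (V//R \<rightarrow>\<^sub>E A)"
      then obtain g where g: "g \<in> V//R \<rightarrow>\<^sub>E A" and c: "c = h g" by blast
      have "c \<in> V \<rightarrow>\<^sub>E A"
        unfolding c h_def using g quotientI[of _ V R] by (auto simp: PiE_def Pi_def)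
      moreover have "\<forall>(u,v)\<in>R. c u = c v"
      proof (clarify)
        fix u v assume uv: "(u,v) \<in> R"
        then have "u \<in> V" "v \<in> V" using equiv_type[OF eq] by auto
        moreover have "R``{u} = R``{v}" using equiv_class_eq[OF eq uv] .
        ultimately show "c u = c v" unfolding c h_def by simp
      qed
      ultimately show "c \<in> {c \<in> V \<rightarrow>\<^sub>E A. \<forall>(u,v)\<in>R. c u = c v}" by blast
    qed
  next
    show "{c \<in> V \<rightarrow>\<^sub>E A. \<forall>(u,v)\<in>R. c u = c v} \<subseteq> h ` (V//R \<rightarrow>\<^sub>E A)"
    proof
      fix c assume cm: "c \<in> {c \<in> V \<rightarrow>\<^sub>E A. \<forall>(u,v)\<in>R. c u = c v}"
      then have cA: "c \<in> V \<rightarrow>\<^sub>E A" and cR: "\<And>u v. (u,v) \<in> R \<Longrightarrow> c u = c v" by auto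
      define g where "g = (\<lambda>X\<in>V//R. c (SOME v. v \<in> X))"
      have some_in: "(SOME v. v \<in> R``{x}) \<in> R``{x}" if "x \<in> V" for x
        using equiv_class_self[OF eq that] by (rule someI)
      have "g \<in> V//R \<rightarrow>\<^sub>E A"
      proof -
        have "c (SOME v. v \<in> X) \<in> A" if "X \<in> V//R" for X
        proof -
          obtain x where x: "X = R``{x}" "x \<in> V" using \<open>X \<in> V//R\<close> by (rule quotientE)
          have "(SOME v. v \<in> X) \<in> V" using some_in[OF x(2)] x(1) equiv_type[OF eq] by blast
          then show ?thesis using cA by (auto simp: PiE_def Pi_def)
        qed
        then show ?thesis unfolding g_def by auto
      qed
      moreover have "h g = c"
      proof (rule extensionalityI)
        show "c \<in> extensional V" using cA by (simp add: PiE_iff)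
        show "h g \<in> extensional V" unfolding h_def by simp
        fix v assume v: "v \<in> V"
        have "(v, SOME w. w \<in> R``{v}) \<in> R" using some_in[OF v] by blast
        then have "c v = c (SOME w. w \<in> R``{v})" by (rule cR)
        then show "h g v = c v" unfolding h_def g_def using v quotientI[of v V R] by simp
      qed
      ultimately show "c \<in> h ` (V//R \<rightarrow>\<^sub>E A)" by blast
    qed
  qed
  have "card {c \<in> V \<rightarrow>\<^sub>E A. \<forall>(u,v)\<in>R. c u = c v} = card (V//R \<rightarrow>\<^sub>E A)"
    using card_image[OF inj] img by simp
  also have "\<dots> = card A ^ card (V//R)"
    using card_PiE[OF finQ, of "\<lambda>_. A"] by simp
  finally show ?thesis .
qed



lemma quot_bound:
  assumes eq: "equiv V R" and finV: "finite V" and Q: "Q \<subseteq> V//R"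
  shows "card (V//R) \<le> card Q + card (V - \<Union>Q)"
proof -
  define s where "s = (\<lambda>X::'a set. SOME x. x \<in> X)"
  have s_in: "s X \<in> X" if XQ: "X \<in> V//R" for X
  proof -
    obtain x where x: "X = R``{x}" "x \<in> V" using XQ by (rule quotientE)
    then have "x \<in> X" using equiv_class_self[OF eq] by blast
    then show ?thesis unfolding s_def by (rule someI)
  qed
  have "card (V//R - Q) \<le> card (V - \<Union>Q)"
  proof (rule card_inj_on_le)
    show "inj_on s (V//R - Q)"
    proof (rule inj_onI)
      fix X Y assume X: "X \<in> V//R - Q" and Y: "Y \<in> V//R - Q" and e: "s X = s Y"
      have "s X \<in> X \<inter> Y" using s_in X Y e by (metis DiffD1 IntI)
      then show "X = Y" using quotient_disj[OF eq] X Y by blast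
    qed
    show "s ` (V//R - Q) \<subseteq> V - \<Union>Q"
    proof
      fix y assume "y \<in> s ` (V//R - Q)"
      then obtain X where X: "X \<in> V//R" "X \<notin> Q" and y: "y = s X" by blast
      have yX: "y \<in> X" using s_in[OF X(1)] y by simp
      have "y \<in> V" using yX X(1) Union_quotient[OF eq] by blast
      moreover have "y \<notin> \<Union>Q"
      proof
        assume "y \<in> \<Union>Q"
        then obtain Y where "Y \<in> Q" "y \<in> Y" by blast
        then have "X = Y" using quotient_disj[OF eq X(1)] Q yX by blast
        then show False using X(2) \<open>Y \<in> Q\<close> by simp
      qed
      ultimately show "y \<in> V - \<Union>Q" by blast
    qed
    show "finite (V - \<Union>Q)" using finV by simp
  qed
  moreover have "V//R = Q \<union> (V//R - Q)" using Q by blast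
  then have "card (V//R) \<le> card Q + card (V//R - Q)" by (metis card_Un_le)
  ultimately show ?thesis by linarith
qed

lemma cF_empty:
  "card (V // RF V {}) = card V"
proof -
  have R: "RF V {} = Id_on V" unfolding RF_def PF_def by simp
  have "V // Id_on V = (\<lambda>x. {x}) ` V" unfolding quotient_def by auto
  moreover have "inj_on (\<lambda>x. {x}) V" by (simp add: inj_on_def)
  ultimately show ?thesis using R by (simp add: card_image)
qed

lemma cF_single:
  assumes TV: "T \<subseteq> V" and cT: "card T = 3" and finV: "finite V"
  shows "card (V // RF V {T}) + 2 = card V"
proof -
  have "trans (T \<times> T)" unfolding trans_def by blast
  then have R: "RF V {T} = Id_on V \<union> T \<times> T" unfolding RF_def PF_def by simp
  have cls: "RF V {T} `` {x} = (if x \<in> T then T else {x})" if "x \<in> V" for x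
    using that unfolding R by auto
  have "V // RF V {T} = (\<lambda>x. RF V {T} `` {x}) ` V" unfolding quotient_def by auto
  also have "\<dots> = (\<lambda>x. if x \<in> T then T else {x}) ` V" using cls by (rule image_cong[OF refl])
  also have "\<dots> = insert T ((\<lambda>x. {x}) ` (V - T))"
  proof -
    have "T \<noteq> {}" using cT by auto
    then show ?thesis using TV by auto
  qed
  finally have Q: "V // RF V {T} = insert T ((\<lambda>x. {x}) ` (V - T))" .
  have "T \<notin> (\<lambda>x. {x}) ` (V - T)" using cT by auto
  moreover have "card ((\<lambda>x. {x}) ` (V - T)) = card (V - T)"
    by (rule card_image) (simp add: inj_on_def)
  moreover have "finite ((\<lambda>x. {x}) ` (V - T))" using finV by simp
  ultimately have "card (V // RF V {T}) = Suc (card (V - T))" unfolding Q by simp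
  moreover have "card (V - T) = card V - 3" using card_Diff_subset[OF finite_subset[OF TV finV] TV] cT by simp
  moreover have "card V \<ge> 3" using card_mono[OF finV TV] cT by simp
  ultimately show ?thesis by simp
qed

lemma cF_two:
  assumes FV: "\<Union>F \<subseteq> V" and finV: "finite V" and T1: "T1 \<in> F" and T2: "T2 \<in> F"
    and ne: "T1 \<noteq> T2" and c1: "card T1 = 3" and c2: "card T2 = 3"
  shows "card (V // RF V F) + 3 \<le> card V"
proof -
  define R where "R = RF V F"
  have eq: "equiv V R" unfolding R_def using equiv_RF[OF FV] .
  have sub1: "T1 \<times> T1 \<subseteq> R" using T1 unfolding R_def RF_def PF_def by blast
  have sub2: "T2 \<times> T2 \<subseteq> R" using T2 unfolding R_def RF_def PF_def by blast
  obtain a where a: "a \<in> T1" using c1 by (metis card.empty ex_in_conv zero_neq_numeral)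
  obtain b where b: "b \<in> T2" using c2 by (metis card.empty ex_in_conv zero_neq_numeral)
  have aV: "a \<in> V" and bV: "b \<in> V" using a b T1 T2 FV by blast+
  define X1 where "X1 = R``{a}"
  define X2 where "X2 = R``{b}"
  have T1X: "T1 \<subseteq> X1" using sub1 a unfolding X1_def by blast
  have T2X: "T2 \<subseteq> X2" using sub2 b unfolding X2_def by blast
  have X1q: "X1 \<in> V//R" unfolding X1_def using aV by (rule quotientI)
  have X2q: "X2 \<in> V//R" unfolding X2_def using bV by (rule quotientI)
  have Qs: "{X1, X2} \<subseteq> V//R" using X1q X2q by blast
  have bound: "card (V//R) \<le> card {X1, X2} + card (V - \<Union>{X1, X2})" by (rule quot_bound[OF eq finV Qs])
  have UV: "\<Union>{X1, X2} \<subseteq> V" using Qs Union_quotient[OF eq] by blast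
  have cd: "card (V - \<Union>{X1, X2}) + card (\<Union>{X1, X2}) = card V"
    using card_Diff_subset[OF finite_subset[OF UV finV] UV] card_mono[OF finV UV] by simp
  have fin12: "finite (T1 \<union> T2)" using c1 c2 card.infinite by fastforce
  have TU: "T1 \<union> T2 \<subseteq> \<Union>{X1, X2}" using T1X T2X by blast
  have cmono: "card (T1 \<union> T2) \<le> card (\<Union>{X1, X2})" using card_mono[OF finite_subset[OF UV finV] TU] .
  show ?thesis
  proof (cases "X1 = X2")
    case True
    have "card (T1 \<union> T2) \<ge> 4"
    proof (rule ccontr)
      assume "\<not> card (T1 \<union> T2) \<ge> 4"
      then have le: "card (T1 \<union> T2) \<le> 3" by simp
      have "T1 = T1 \<union> T2" using card_subset_eq[OF fin12, of T1] le c1 card_mono[OF fin12, of T1] by simp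
      moreover have "T2 = T1 \<union> T2" using card_subset_eq[OF fin12, of T2] le c2 card_mono[OF fin12, of T2] by simp
      ultimately show False using ne by simp
    qed
    moreover have "card {X1, X2} = 1" using True by simp
    ultimately show ?thesis using bound cd cmono unfolding R_def by linarith
  next
    case False
    then have "X1 \<inter> X2 = {}" using quotient_disj[OF eq X1q X2q] by blast
    then have "T1 \<inter> T2 = {}" using T1X T2X by blast
    then have "card (T1 \<union> T2) = 6" using card_Un_disjoint fin12 c1 c2 by (metis finite_Un numeral_Bit0 numeral_plus_numeral numeral_One one_plus_numeral add_numeral_special(1) numeral_Bit1)
    moreover have "card {X1, X2} = 2" using False by simp
    ultimately show ?thesis using bound cd cmono unfolding R_def by linarith
  qed
qed



lemma tri_basic:
  assumes T: "tournament V E"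
  shows "finite (tri_set V E)" "\<And>S. S \<in> tri_set V E \<Longrightarrow> S \<subseteq> V \<and> card S = 3"
proof -
  have finV: "finite V" using T by (simp add: tournament_def)
  have "tri_set V E \<subseteq> Pow V" by (auto simp: tri_set_def)
  then show "finite (tri_set V E)" using finV finite_subset by blast
  fix S assume "S \<in> tri_set V E"
  then obtain a b d where S: "S \<subseteq> V" "S = {a,b,d}" "a \<noteq> b" "b \<noteq> d" "a \<noteq> d"
    unfolding tri_set_def mem_Collect_eq by (elim conjE exE) blast
  then show "S \<subseteq> V \<and> card S = 3" by simp
qed

lemma poly_value:
  assumes T: "tournament V E"
  shows "poly (\<Sum>F\<in>Pow (tri_set V E). monom ((-1) ^ card F) (card (V // RF V F))) (int k)
         = int (card (proper_colorings V E k))"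
proof -
  have finV: "finite V" using T by (simp add: tournament_def)
  have "int (card (proper_colorings V E k)) =
    (\<Sum>F\<in>Pow (tri_set V E). (-1) ^ card F * int (card {c \<in> V \<rightarrow>\<^sub>E {1..k}. \<forall>S\<in>F. monoc c S}))"
    by (rule incl_excl[OF T])
  also have "\<dots> = (\<Sum>F\<in>Pow (tri_set V E). (-1) ^ card F * int k ^ card (V // RF V F))"
  proof (rule sum.cong[OF refl])
    fix F assume "F \<in> Pow (tri_set V E)"
    then have FV: "\<Union>F \<subseteq> V" using tri_basic(2)[OF T] by blast
    have "{c \<in> V \<rightarrow>\<^sub>E {1..k}. \<forall>S\<in>F. monoc c S} = {c \<in> V \<rightarrow>\<^sub>E {1..k}. \<forall>(u,v)\<in>RF V F. c u = c v}"
      using mono_iff_RF[OF FV] by blast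
    also have "card \<dots> = card {1..k} ^ card (V // RF V F)"
      by (rule count_quot[OF equiv_RF[OF FV] finV]) simp
    finally show "(-1) ^ card F * int (card {c \<in> V \<rightarrow>\<^sub>E {1..k}. \<forall>S\<in>F. monoc c S}) =
        (-1) ^ card F * int k ^ card (V // RF V F)" by simp
  qed
  finally show ?thesis by (simp add: poly_sum poly_monom)
qed

theorem mainTheorem8:
  fixes V :: "'a set" and E :: "'a \<Rightarrow> 'a \<Rightarrow> bool"
  assumes "tournament V E"
  defines "n \<equiv> int (card V)"
  shows "coeff_int (dichromatic_poly V E) (n - 1) = 0 \<and>
         coeff_int (dichromatic_poly V E) (n - 2) = - int (num_directed_triangles V E)"
proof -
  note T = assms(1)
  have finV: "finite V" using T by (simp add: tournament_def)
  define Tri where "Tri = tri_set V E"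
  define cf where "cf = (\<lambda>F. card (V // RF V F))"
  define p where "p = (\<Sum>F\<in>Pow Tri. monom ((-1) ^ card F) (cf F) :: int poly)"
  have finT: "finite Tri" unfolding Tri_def using tri_basic(1)[OF T] .
  have TriV: "\<And>S. S \<in> Tri \<Longrightarrow> S \<subseteq> V \<and> card S = 3" unfolding Tri_def using tri_basic(2)[OF T] .
  have pv: "poly p (int k) = int (card (proper_colorings V E k))" for k
    unfolding p_def cf_def Tri_def by (rule poly_value[OF T])
  have dp: "dichromatic_poly V E = p"
    unfolding dichromatic_poly_def
  proof (rule the_equality)
    show "\<forall>k::nat. k \<ge> 1 \<longrightarrow> poly p (int k) = int (card (proper_colorings V E k))" using pv by blast
  next
    fix q :: "int poly" assume q: "\<forall>k::nat. k \<ge> 1 \<longrightarrow> poly q (int k) = int (card (proper_colorings V E k))"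
    show "q = p"
    proof (rule ccontr)
      assume "q \<noteq> p"
      then have "q - p \<noteq> 0" by simp
      then have fin: "finite {x. poly (q - p) x = 0}" by (rule poly_roots_finite)
      have "int ` {1::nat..} \<subseteq> {x. poly (q - p) x = 0}" using q pv by auto
      then have "finite (int ` {1::nat..})" using fin finite_subset by blast
      then have "finite {1::nat..}" using finite_imageD[of int "{1::nat..}"] by (simp add: inj_on_def)
      then show False using infinite_Ici by blast
    qed
  qed
  have cpm: "coeff p m = (\<Sum>F\<in>Pow Tri. if cf F = m then (-1) ^ card F else 0)" for m
    unfolding p_def by (simp add: coeff_sum coeff_monom)
  have cases: "F = {} \<or> (\<exists>S. F = {S}) \<or> (\<exists>S1 S2. S1 \<in> F \<and> S2 \<in> F \<and> S1 \<noteq> S2)" for F :: "'a set set"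
    by blast
  have cf0: "cf {} = card V" unfolding cf_def by (rule cF_empty)
  have cf1: "cf {S} + 2 = card V" if "S \<in> Tri" for S
    unfolding cf_def using cF_single[OF _ _ finV] TriV[OF that] by blast
  have cf2: "cf F + 3 \<le> card V" if "F \<subseteq> Tri" "S1 \<in> F" "S2 \<in> F" "S1 \<noteq> S2" for F S1 S2
  proof -
    have FV: "\<Union>F \<subseteq> V" using that(1) TriV by blast
    show ?thesis unfolding cf_def
      by (rule cF_two[OF FV finV that(2,3,4)]) (use that TriV in blast)+
  qed
  have part1: "coeff_int p (n - 1) = 0"
  proof (cases "card V = 0")
    case True then show ?thesis unfolding coeff_int_def n_def by simp
  next
    case False
    then have nn: "nat (n - 1) = card V - 1" unfolding n_def by simp
    have "coeff p (card V - 1) = 0"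
      unfolding cpm
    proof (rule sum.neutral, rule ballI)
      fix F assume F: "F \<in> Pow Tri"
      have "cf F \<noteq> card V - 1"
        using cases[of F]
      proof (elim disjE exE conjE)
        assume "F = {}" then show ?thesis using cf0 False by simp
      next
        fix S assume FS: "F = {S}"
        then have "S \<in> Tri" using F by blast
        then have "cf {S} + 2 = card V" by (rule cf1)
        then show ?thesis unfolding FS by simp
      next
        fix S1 S2 assume "S1 \<in> F" "S2 \<in> F" "S1 \<noteq> S2"
        moreover have "F \<subseteq> Tri" using F by blast
        ultimately have "cf F + 3 \<le> card V" using cf2 by blast
        then show ?thesis by simp
      qed
      then show "(if cf F = card V - 1 then (-1) ^ card F else 0) = (0::int)" by simp
    qed
    then show ?thesis unfolding coeff_int_def nn using False n_def by simp
  qed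
  have part2: "coeff_int p (n - 2) = - int (card Tri)"
  proof (cases "card V < 2")
    case True
    have "Tri = {}"
    proof (rule ccontr)
      assume "Tri \<noteq> {}"
      then obtain S where "S \<in> Tri" by blast
      then have "S \<subseteq> V" "card S = 3" using TriV by blast+
      then have "3 \<le> card V" using card_mono[OF finV] by metis
      then show False using True by simp
    qed
    then show ?thesis unfolding coeff_int_def n_def using True by simp
  next
    case False
    then have nn: "nat (n - 2) = card V - 2" unfolding n_def by simp
    have "coeff p (card V - 2) = (\<Sum>F\<in>Pow Tri. if card F = 1 then -1 else 0)"
      unfolding cpm
    proof (rule sum.cong[OF refl])
      fix F assume F: "F \<in> Pow Tri"
      show "(if cf F = card V - 2 then (-1) ^ card F else 0) = (if card F = 1 then -1 else (0::int))"
        using cases[of F]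
      proof (elim disjE exE conjE)
        assume "F = {}" then show ?thesis using cf0 False by simp
      next
        fix S assume FS: "F = {S}"
        then have "S \<in> Tri" using F by blast
        then have "cf {S} + 2 = card V" by (rule cf1)
        then show ?thesis unfolding FS by simp
      next
        fix S1 S2 assume S: "S1 \<in> F" "S2 \<in> F" "S1 \<noteq> S2"
        have "F \<subseteq> Tri" using F by blast
        then have "cf F + 3 \<le> card V" using cf2 S by blast
        then have "cf F \<noteq> card V - 2" by simp
        moreover have "card F \<noteq> 1" using S by (metis card_1_singletonE singletonD)
        ultimately show ?thesis by simp
      qed
    qed
    also have "\<dots> = (\<Sum>F\<in>{F \<in> Pow Tri. card F = 1}. -1)"
      by (rule sum.inter_filter[symmetric]) (simp add: finT)
    also have "\<dots> = - int (card {F \<in> Pow Tri. card F = 1})" by simp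
    also have "{F \<in> Pow Tri. card F = 1} = (\<lambda>S. {S}) ` Tri"
      by (auto simp: card_1_singleton_iff)
    also have "card \<dots> = card Tri" by (rule card_image) (simp add: inj_on_def)
    finally show ?thesis unfolding coeff_int_def nn using False n_def by simp
  qed
  show ?thesis using part1 part2 unfolding dp num_tri Tri_def by simp
qed

end
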